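(* For all odd integers $n\ge1$ and real numbers $a\ge1$, $x\in(-1,1)$, we have $\Lambda_{n,a}(x)\ge 2(1+x)$. Equality holds if and only if $n=1$, $a=1$ (any $x$), or $n=3$, $a=1$, $x=0$.
   Context: $U_j$ denotes the Chebyshev polynomial of the second kind of degree $j$, i.e. $U_j(\cos t)=\sin((j+1)t)/\sin t$. For a real number $a$ and integers $0\le m$, $\binom{m+a}{m}=\frac{(a+1)(a+2)\cdots(a+m)}{m!}$ (equal to $1$ when $m=0$). For an integer $n\ge0$, $\Lambda_{n,a}(x)=\sum_{j=0}^n\binom{n+a-j}{n-j}U_j(x)$. *)

theory Defs
  imports "HOL-Analysis.Analysis"
begin

text \<open>Chebyshev polynomials of the second kind, via the standard three-term recurrence
  (equivalently U_j(cos t) = sin((j+1)t)/sin t).\<close>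
fun chebU :: "nat \<Rightarrow> real \<Rightarrow> real" where
  "chebU 0 x = 1"
| "chebU (Suc 0) x = 2 * x"
| "chebU (Suc (Suc j)) x = 2 * x * chebU (Suc j) x - chebU j x"

text \<open>binom(m+a, m) = (a+1)(a+2)...(a+m)/m! for real a.\<close>
definition binomR :: "real \<Rightarrow> nat \<Rightarrow> real" where
  "binomR a m = (\<Prod>i=1..m. (a + real i)) / fact m"

definition Lambda :: "nat \<Rightarrow> real \<Rightarrow> real \<Rightarrow> real" where
  "Lambda n a x = (\<Sum>j=0..n. binomR a (n - j) * chebU j x)"

end

theory Submission
  imports Defs
begin

definition SU :: "nat \<Rightarrow> real \<Rightarrow> real" where
  "SU m x = (\<Sum>j\<le>m. chebU j x)"

definition PU :: "nat \<Rightarrow> real \<Rightarrow> real" where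
  "PU m x = (\<Sum>j\<le>m. (real m + 1 - real j) * chebU j x)"

lemma L1aux:
  "chebU (Suc (Suc (j + k))) x = chebU (Suc j) x * chebU (Suc k) x - chebU j x * chebU k x
   \<and> chebU (Suc (Suc (j + Suc k))) x = chebU (Suc j) x * chebU (Suc (Suc k)) x - chebU j x * chebU (Suc k) x"
proof (induction k)
  case 0
  have a: "chebU (Suc (Suc (Suc j))) x = 2*x*chebU (Suc (Suc j)) x - chebU (Suc j) x" by (simp only: chebU.simps)
  have b: "chebU (Suc (Suc j)) x = 2*x*chebU (Suc j) x - chebU j x" by (simp only: chebU.simps)
  have c: "chebU (Suc (Suc 0)) x = 2*x*(2*x) - 1" by simp
  have d: "chebU 0 x = 1" "chebU (Suc 0) x = 2*x" by simp_all
  show ?case using a b by (simp del: chebU.simps add: c d algebra_simps)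
next
  case (Suc k)
  have a: "chebU (Suc (Suc (Suc (Suc (j+k))))) x = 2*x*chebU (Suc (Suc (Suc (j+k)))) x - chebU (Suc (Suc (j+k))) x" by (simp only: chebU.simps)
  have b: "chebU (Suc (Suc (Suc k))) x = 2*x*chebU (Suc (Suc k)) x - chebU (Suc k) x" by (simp only: chebU.simps)
  have b2: "chebU (Suc (Suc k)) x = 2*x*chebU (Suc k) x - chebU k x" by (simp only: chebU.simps)
  have i1: "chebU (Suc (Suc (j + k))) x = chebU (Suc j) x * chebU (Suc k) x - chebU j x * chebU k x"
   and i2: "chebU (Suc (Suc (Suc (j + k)))) x = chebU (Suc j) x * chebU (Suc (Suc k)) x - chebU j x * chebU (Suc k) x"
    using Suc.IH by auto
  have "chebU (Suc (Suc (Suc (Suc (j+k))))) x = chebU (Suc j) x * chebU (Suc (Suc (Suc k))) x - chebU j x * chebU (Suc (Suc k)) x"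
    unfolding a b i1 i2 by (simp del: chebU.simps add: b2 algebra_simps)
  then show ?case using i2 by simp
qed

lemma L1: "chebU (Suc (Suc (j + k))) x = chebU (Suc j) x * chebU (Suc k) x - chebU j x * chebU k x"
  using L1aux by blast

lemma SU_Suc: "SU (Suc n) x = SU n x + chebU (Suc n) x"
  by (simp add: SU_def)

lemma L2: "SU (Suc (2*m)) x + SU (2*m) x = 2*(1+x)*(chebU m x)^2"
proof (induction m)
  case 0
  show ?case by (simp add: SU_def)
next
  case (Suc m)
  have e1: "2 * Suc m = Suc (Suc (2*m))" by simp
  have l: "chebU (Suc (Suc (2*m))) x = (chebU (Suc m) x)^2 - (chebU m x)^2"
    using L1[of m m x] by (simp only: power2_eq_square mult_2)
  have r: "chebU (Suc (Suc (Suc (2*m)))) x = 2*x*chebU (Suc (Suc (2*m))) x - chebU (Suc (2*m)) x"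
    by (simp only: chebU.simps)
  have s1: "SU (Suc (Suc (Suc (2*m)))) x + SU (Suc (Suc (2*m))) x
     = (SU (Suc (2*m)) x + SU (2*m) x) + chebU (Suc (2*m)) x + 2*chebU (Suc (Suc (2*m))) x + chebU (Suc (Suc (Suc (2*m)))) x"
    unfolding SU_Suc by linarith
  show ?case unfolding e1 s1 Suc.IH r l
    by (simp del: chebU.simps add: algebra_simps power2_eq_square)
qed

lemma L3: "SU (Suc (Suc (2*m))) x + SU (Suc (2*m)) x = (chebU (Suc m) x + chebU m x)^2"
proof (induction m)
  case 0
  show ?case by (simp add: SU_def power2_eq_square algebra_simps)
next
  case (Suc m)
  have e1: "2 * Suc m = Suc (Suc (2*m))" by simp
  have l: "chebU (Suc (Suc (Suc (2*m)))) x = chebU (Suc (Suc m)) x * chebU (Suc m) x - chebU (Suc m) x * chebU m x"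
    using L1[of "Suc m" m x] by (simp only: mult_2 add_Suc)
  have r: "chebU (Suc (Suc (Suc (Suc (2*m))))) x = 2*x*chebU (Suc (Suc (Suc (2*m)))) x - chebU (Suc (Suc (2*m))) x"
    by (simp only: chebU.simps)
  have r2: "chebU (Suc (Suc m)) x = 2*x*chebU (Suc m) x - chebU m x"
    by (simp only: chebU.simps)
  have s1: "SU (Suc (Suc (Suc (Suc (2*m))))) x + SU (Suc (Suc (Suc (2*m)))) x
     = (SU (Suc (Suc (2*m))) x + SU (Suc (2*m)) x) + chebU (Suc (Suc (2*m))) x + 2*chebU (Suc (Suc (Suc (2*m)))) x + chebU (Suc (Suc (Suc (Suc (2*m))))) x"
    unfolding SU_Suc by linarith
  show ?case unfolding e1 s1 Suc.IH r l r2
    by (simp del: chebU.simps add: algebra_simps power2_eq_square)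
qed

lemma PU_Suc: "PU (Suc m) x = PU m x + SU (Suc m) x"
proof -
  have "(\<Sum>j\<le>m. (real (Suc m) + 1 - real j) * chebU j x)
      = (\<Sum>j\<le>m. (real m + 1 - real j) * chebU j x) + (\<Sum>j\<le>m. chebU j x)"
    by (simp add: sum.distrib[symmetric] algebra_simps)
  then show ?thesis by (simp add: PU_def SU_def)
qed

lemma PU_odd: "PU (Suc (2*m)) x = 2*(1+x)*(\<Sum>i\<le>m. (chebU i x)^2)"
proof (induction m)
  case 0
  show ?case by (simp add: PU_def)
next
  case (Suc m)
  have e1: "2 * Suc m = Suc (Suc (2*m))" by simp
  have "PU (Suc (2 * Suc m)) x = PU (Suc (2*m)) x + (SU (Suc (2 * Suc m)) x + SU (2 * Suc m) x)"
    unfolding e1 PU_Suc by simp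
  also have "\<dots> = 2*(1+x)*(\<Sum>i\<le>Suc m. (chebU i x)^2)"
    unfolding L2 Suc.IH by (simp add: algebra_simps)
  finally show ?case .
qed

lemma PU_even: "PU (2*m) x = 1 + (\<Sum>i<m. (chebU (Suc i) x + chebU i x)^2)"
proof (induction m)
  case 0
  show ?case by (simp add: PU_def)
next
  case (Suc m)
  have e1: "2 * Suc m = Suc (Suc (2*m))" by simp
  have "PU (2 * Suc m) x = PU (2*m) x + (SU (Suc (Suc (2*m))) x + SU (Suc (2*m)) x)"
    unfolding e1 PU_Suc by simp
  also have "\<dots> = 1 + (\<Sum>i<Suc m. (chebU (Suc i) x + chebU i x)^2)"
    unfolding L3 Suc.IH by simp
  finally show ?case .
qed

lemma prod_shift: "(\<Prod>i=1..Suc m. (b - 1 + real i)) = b * (\<Prod>i=1..m. (b + real i))"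
proof (induction m)
  case 0
  then show ?case by simp
next
  case (Suc m)
  then show ?case by (simp add: algebra_simps)
qed

lemma pascal: "binomR b (Suc m) = binomR b m + binomR (b-1) (Suc m)"
proof -
  define A where "A = (\<Prod>i=1..m. (b + real i))"
  define f :: real where "f = fact m"
  define s where "s = real (Suc m)"
  have fp: "f > 0" "s > 0" by (simp_all add: f_def s_def)
  have 1: "(\<Prod>i=1..Suc m. (b + real i)) = A * (b + s)" by (simp add: A_def s_def)
  have 2: "(\<Prod>i=1..Suc m. (b - 1 + real i)) = b * A" using prod_shift by (simp add: A_def)
  have f: "fact (Suc m) = s * f" by (simp add: s_def f_def)
  have "A * (b + s) / (s * f) = A / f + b * A / (s * f)"
    using fp by (simp add: field_simps)
  then show ?thesis unfolding binomR_def 1 2 A_def[symmetric] f f_def[symmetric] .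
qed

lemma binomR0[simp]: "binomR b 0 = 1" by (simp add: binomR_def)

lemma hockey: "(\<Sum>k\<le>m. binomR b k) = binomR (b+1) m"
proof (induction m)
  case 0 then show ?case by simp
next
  case (Suc m)
  then show ?case using pascal[of "b+1" m] by simp
qed

lemma conv: "binomR a m = (\<Sum>k\<le>m. binomR (a-2) k * (real m + 1 - real k))"
proof (induction m)
  case 0 then show ?case by simp
next
  case (Suc m)
  have "(\<Sum>k\<le>Suc m. binomR (a-2) k * (real (Suc m) + 1 - real k))
      = (\<Sum>k\<le>m. binomR (a-2) k * (real m + 1 - real k)) + (\<Sum>k\<le>Suc m. binomR (a-2) k)"
    by (simp add: sum.distrib[symmetric] algebra_simps)
  also have "\<dots> = binomR a m + binomR (a-1) (Suc m)"
    using Suc.IH hockey[of "a-2" "Suc m"] by simp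
  also have "\<dots> = binomR a (Suc m)" using pascal[of a m] by simp
  finally show ?case by simp
qed

lemma swap_tri: fixes h :: "nat \<Rightarrow> nat \<Rightarrow> real" shows "(\<Sum>j\<le>n. \<Sum>k\<le>n-j. h j k) = (\<Sum>k\<le>n. \<Sum>j\<le>n-k. (h j k :: real))"
proof -
  have A: "(\<Sum>j\<le>n. \<Sum>k\<le>n-j. h j k) = (\<Sum>j\<le>n. \<Sum>k\<in>{y. y \<in> {..n} \<and> j + y \<le> n}. h j k)"
    by (intro sum.cong refl) auto
  have B: "(\<Sum>k\<le>n. \<Sum>j\<le>n-k. h j k) = (\<Sum>k\<le>n. \<Sum>j\<in>{x. x \<in> {..n} \<and> x + k \<le> n}. h j k)"
    by (intro sum.cong refl) auto
  show ?thesis unfolding A B by (rule sum.swap_restrict) auto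
qed

lemma decomp: "Lambda n a x = (\<Sum>k\<le>n. binomR (a-2) k * PU (n-k) x)"
proof -
  have "Lambda n a x = (\<Sum>j\<le>n. binomR a (n-j) * chebU j x)"
    by (simp add: Lambda_def atLeast0AtMost)
  also have "\<dots> = (\<Sum>j\<le>n. \<Sum>k\<le>n-j. binomR (a-2) k * (real (n-j) + 1 - real k) * chebU j x)"
    by (simp add: conv[of a] sum_distrib_right)
  also have "\<dots> = (\<Sum>k\<le>n. \<Sum>j\<le>n-k. binomR (a-2) k * (real (n-j) + 1 - real k) * chebU j x)"
    by (rule swap_tri)
  also have "\<dots> = (\<Sum>k\<le>n. binomR (a-2) k * PU (n-k) x)"
    unfolding PU_def sum_distrib_left
    by (intro sum.cong refl) (auto simp: of_nat_diff algebra_simps)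
  finally show ?thesis .
qed

lemma d_nonneg: assumes "a \<ge> 1" shows "binomR (a-2) k \<ge> 0"
  unfolding binomR_def using assms
  by (intro divide_nonneg_pos prod_nonneg) auto

lemma d_one: "binomR (a-2) (Suc 0) = a - 1"
  by (simp add: binomR_def)

lemma d_zero: "binomR (1-2) (Suc k) = 0"
proof -
  have "(\<Prod>i=1..Suc k. ((1::real)-2) + real i) = 0"
    by (rule prod_zero) auto
  then show ?thesis by (simp add: binomR_def)
qed

lemma PU_nonneg: assumes "-1 < x" shows "PU m x \<ge> 0"
proof (cases "even m")
  case True
  then obtain q where q: "m = 2*q" by blast
  have "0 \<le> (\<Sum>i<q. (chebU (Suc i) x + chebU i x)^2)" by (rule sum_nonneg) simp
  then show ?thesis unfolding q PU_even by linarith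
next
  case False
  then obtain q where q: "m = Suc (2*q)" by (metis oddE Suc_eq_plus1)
  have "0 \<le> (\<Sum>i\<le>q. (chebU i x)^2)" by (rule sum_nonneg) simp
  moreover have "0 \<le> 2*(1+x)" using assms by simp
  ultimately show ?thesis unfolding q PU_odd by (rule mult_nonneg_nonneg[rotated])
qed

theorem theorem4p2:
  fixes n :: nat and a x :: real
  assumes "odd n" and "n \<ge> 1" and "a \<ge> 1" and "-1 < x" and "x < 1"
  shows "Lambda n a x \<ge> 2 * (1 + x)
         \<and> (Lambda n a x = 2 * (1 + x) \<longleftrightarrow>
              (n = 1 \<and> a = 1) \<or> (n = 3 \<and> a = 1 \<and> x = 0))"
proof -
  obtain m where n: "n = Suc (2*m)" using assms(1) by (metis oddE Suc_eq_plus1)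
  define f where "f k = binomR (a-2) k * PU (n-k) x" for k
  define R where "R = (\<Sum>k<2*m. f (Suc (Suc k)))"
  have "Lambda n a x = (\<Sum>k\<le>n. f k)" unfolding decomp f_def ..
  also have "\<dots> = f 0 + (\<Sum>k\<le>2*m. f (Suc k))" unfolding n by (rule sum.atMost_Suc_shift)
  also have "(\<Sum>k\<le>2*m. f (Suc k)) = f (Suc 0) + R" unfolding R_def by (rule sum.atMost_shift)
  finally have L: "Lambda n a x = f 0 + f (Suc 0) + R" by simp
  have f0: "f 0 = PU n x" by (simp add: f_def)
  have f1: "f (Suc 0) = (a-1) * PU (2*m) x" by (simp add: f_def d_one n)
  have Rnn: "R \<ge> 0" unfolding R_def f_def
    using assms by (intro sum_nonneg mult_nonneg_nonneg d_nonneg PU_nonneg) auto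
  have R0: "R = 0" if a1: "a = 1"
  proof -
    have "\<forall>k. binomR (a-2) (Suc k) = 0" using d_zero a1 by simp
    then show ?thesis unfolding R_def f_def by simp
  qed
  have Pev0: "(\<Sum>i<m. (chebU (Suc i) x + chebU i x)^2) \<ge> 0" by (intro sum_nonneg) auto
  have Pev: "PU (2*m) x \<ge> 1" unfolding PU_even using Pev0 by linarith
  define V where "V = (\<Sum>i<m. (chebU (Suc i) x)^2)"
  have Vnn: "V \<ge> 0" unfolding V_def by (intro sum_nonneg) auto
  have Pn: "PU n x = 2*(1+x)*(1+V)" unfolding n PU_odd V_def
    by (simp add: sum.atMost_shift)
  have xp: "1 + x > 0" using assms by simp
  have f1nn: "f (Suc 0) \<ge> 0" unfolding f1 using assms Pev by simp
  have g1: "2*(1+x)*(1+V) = 2*(1+x) + 2*(1+x)*V" by (simp add: algebra_simps)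
  have g2: "2*(1+x)*V \<ge> 0" using xp Vnn by simp
  have ge: "PU n x \<ge> 2*(1+x)" unfolding Pn g1 using g2 by linarith
  have V0: "V = 0 \<longleftrightarrow> m = 0 \<or> (m = 1 \<and> x = 0)"
  proof
    assume "V = 0"
    then have all0: "\<forall>i<m. (chebU (Suc i) x)^2 = 0"
      unfolding V_def by (subst (asm) sum_nonneg_eq_0_iff) auto
    show "m = 0 \<or> (m = 1 \<and> x = 0)"
    proof (cases "m = 0")
      case False
      then have "(chebU (Suc 0) x)^2 = 0" using all0 by auto
      then have x0: "x = 0" by simp
      have "m < 2"
      proof (rule ccontr)
        assume "\<not> m < 2"
        then have "1 < m" by simp
        then have "(chebU (Suc 1) x)^2 = 0" using all0 by blast
        then show False using x0 by (simp add: numeral_eq_Suc)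
      qed
      then show ?thesis using False x0 by auto
    qed simp
  next
    assume "m = 0 \<or> (m = 1 \<and> x = 0)"
    then show "V = 0" unfolding V_def by auto
  qed
  have eq: "Lambda n a x = 2*(1+x) \<longleftrightarrow> a = 1 \<and> V = 0"
  proof
    assume h: "Lambda n a x = 2*(1+x)"
    have s: "PU n x + f (Suc 0) + R = 2*(1+x)" using h L f0 by linarith
    have p1: "PU n x = 2*(1+x)" using s ge f1nn Rnn by linarith
    have p2: "f (Suc 0) = 0" using s ge f1nn Rnn by linarith
    have "(a-1) * PU (2*m) x = 0" using p2 f1 by simp
    then have a1: "a = 1" using Pev by simp
    have "2*(1+x)*(1+V) = 2*(1+x)" using p1 Pn by simp
    then have "2*(1+x)*V = 0" by (simp add: algebra_simps)
    then have "V = 0" using xp by simp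
    then show "a = 1 \<and> V = 0" using a1 by simp
  next
    assume h: "a = 1 \<and> V = 0"
    have "R = 0" using R0 h by blast
    moreover have "f (Suc 0) = 0" using f1 h by simp
    moreover have "f 0 = 2*(1+x)" using f0 Pn h by simp
    ultimately show "Lambda n a x = 2*(1+x)" using L by linarith
  qed
  have A: "Lambda n a x \<ge> 2*(1+x)" using L f0 ge f1nn Rnn by linarith
  have n1: "n = 1 \<longleftrightarrow> m = 0" using n by auto
  have n3: "n = 3 \<longleftrightarrow> m = 1" using n by auto
  have B: "((n = 1 \<and> a = 1) \<or> (n = 3 \<and> a = 1 \<and> x = 0)) \<longleftrightarrow> a = 1 \<and> V = 0"
    unfolding V0 n1 n3 by blast
  have C: "Lambda n a x = 2 * (1 + x) \<longleftrightarrow> (n = 1 \<and> a = 1) \<or> (n = 3 \<and> a = 1 \<and> x = 0)"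
    using eq B by (rule trans[OF _ sym])
  show ?thesis using A C by (rule conjI)
qed

end
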